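(* Under the hypotheses of the preceding proposition (equation for Whiting's transform) and assuming moreover $\operatorname{Im}\omega>0$, the transform $\tilde u$ satisfies, with $x^*=r^*(x)$ and primes denoting $d/dx^*$: (1) $\tilde u=O\big((x-r_+)^{2M\operatorname{Im}\omega}\big)$ and (2) $\tilde u'=O\big((x-r_+)^{2M\operatorname{Im}\omega}\big)$ as $x\to r_+$; (3) $\tilde u=O\big(e^{-\operatorname{Im}(\omega)x}x^{1+2M\operatorname{Im}\omega}\big)$ and (4) $\tilde u'=O\big(e^{-\operatorname{Im}(\omega)x}x^{1+2M\operatorname{Im}\omega}\big)$ as $x\to\infty$.
   Context: Fix $M>0$ and $a\in\mathbb{R}$ with $|a|<M$. Let $r_\pm:=M\pm\sqrt{M^2-a^2}$ and $\Delta(r):=r^2-2Mr+a^2=(r-r_+)(r-r_-)$. Let $r^*:(r_+,\infty)\to(-\infty,\infty)$ be a fixed increasing bijection with $\frac{dr^*}{dr}=\frac{r^2+a^2}{\Delta}$; a prime $'$ denotes $d/dr^*$. Complex powers $(r-r_\pm)^c$ mean $e^{c\log(r-r_\pm)}$ with the real logarithm. Radial ODE: given $\omega,m,\lambda$, set $V:=\frac{4Mram\omega-a^2m^2+\Delta(\lambda+a^2\omega^2)}{(r^2+a^2)^2}+\frac{\Delta}{(r^2+a^2)^4}\big(a^2\Delta+2Mr(r^2-a^2)\big)$. Hypotheses: $\omega\in\mathbb{C}$, $m\in\mathbb{Z}$, $\lambda\in\mathbb{C}$, $F$ smooth and compactly supported in $(r_+,\infty)$ (possibly $0$), $u$ solves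 $u''+(\omega^2-V)u=\frac{\Delta}{(r^2+a^2)^{1/2}}F$ and satisfies the mode boundary conditions: with $\xi:=\frac{i(am-2Mr_+\omega)}{r_+-r_-}$, (i) $(r-r_+)^{-\xi}u$ extends smoothly in $r$ to $r=r_+$; (ii) for constants $C_i$ and every $N$, $u=e^{i\omega r^*}\sum_{i=0}^NC_ir^{-i}+O(r^{-N-1})$ as $r\to\infty$. $R:=(r^2+a^2)^{-1/2}u$. Whiting's transform: with $\eta:=\frac{-i(am-2Mr_-\omega)}{r_+-r_-}$, $\tilde u(x^* ):=(x^2+a^2)^{1/2}(x-r_+)^{-2iM\omega}e^{-i\omega x}\int_{r_+}^\infty e^{\frac{2i\omega}{r_+-r_-}(x-r_-)(r-r_-)}(r-r_-)^{\eta}(r-r_+)^{\xi}e^{-i\omega r}R(r)\,dr$, $x\in(r_+,\infty)$, $x^*=r^*(x)$. *)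

theory Defs
  imports "HOL-Analysis.Analysis"
begin

definition rplus :: "real \<Rightarrow> real \<Rightarrow> real" where
  "rplus M a = M + sqrt (M^2 - a^2)"

definition rminus :: "real \<Rightarrow> real \<Rightarrow> real" where
  "rminus M a = M - sqrt (M^2 - a^2)"

definition Delta :: "real \<Rightarrow> real \<Rightarrow> real \<Rightarrow> real" where
  "Delta M a r = r^2 - 2*M*r + a^2"

definition cpow :: "real \<Rightarrow> complex \<Rightarrow> complex" where
  "cpow x c = exp (c * complex_of_real (ln x))"

definition smooth_fun :: "(real \<Rightarrow> 'a::real_normed_vector) \<Rightarrow> bool" where
  "smooth_fun f \<longleftrightarrow> (\<exists>D :: nat \<Rightarrow> real \<Rightarrow> 'a. D 0 = f \<and>
      (\<forall>k x. (D k has_vector_derivative D (Suc k) x) (at x)))"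

definition Vpot :: "real \<Rightarrow> real \<Rightarrow> complex \<Rightarrow> int \<Rightarrow> complex \<Rightarrow> real \<Rightarrow> complex" where
  "Vpot M a \<omega> m lam r =
     (complex_of_real (4*M*r*a*real_of_int m) * \<omega> - complex_of_real (a^2 * (real_of_int m)^2)
        + complex_of_real (Delta M a r) * (lam + complex_of_real (a^2) * \<omega>^2)) / complex_of_real ((r^2 + a^2)^2)
     + complex_of_real (Delta M a r / (r^2 + a^2)^4
        * (a^2 * Delta M a r + 2*M*r*(r^2 - a^2)))"

definition xi_exp :: "real \<Rightarrow> real \<Rightarrow> complex \<Rightarrow> int \<Rightarrow> complex" where
  "xi_exp M a \<omega> m = \<i> * (complex_of_real (a * real_of_int m) - complex_of_real (2*M*rplus M a) * \<omega>) / complex_of_real (rplus M a - rminus M a)"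

definition eta_exp :: "real \<Rightarrow> real \<Rightarrow> complex \<Rightarrow> int \<Rightarrow> complex" where
  "eta_exp M a \<omega> m = - \<i> * (complex_of_real (a * real_of_int m) - complex_of_real (2*M*rminus M a) * \<omega>) / complex_of_real (rplus M a - rminus M a)"

text \<open>Whiting's transform, as a function of x \<in> (r_+,\<infinity>) (its value at x* = r*(x)).
  Here rs is the tortoise coordinate r* and u is a function of r*; R(r) = (r^2+a^2)^(-1/2) u(r*(r)).\<close>
definition whiting :: "real \<Rightarrow> real \<Rightarrow> complex \<Rightarrow> int \<Rightarrow> (real \<Rightarrow> real) \<Rightarrow> (real \<Rightarrow> complex)
    \<Rightarrow> real \<Rightarrow> complex" where
  "whiting M a \<omega> m rs u x =
     complex_of_real (sqrt (x^2 + a^2)) * cpow (x - rplus M a) (- 2 * \<i> * complex_of_real M * \<omega>)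
     * exp (- \<i> * \<omega> * complex_of_real x)
     * (LINT r:{rplus M a<..}|lborel.
          exp (2 * \<i> * \<omega> / complex_of_real (rplus M a - rminus M a)
                 * complex_of_real ((x - rminus M a) * (r - rminus M a)))
          * cpow (r - rminus M a) (eta_exp M a \<omega> m)
          * cpow (r - rplus M a) (xi_exp M a \<omega> m)
          * exp (- \<i> * \<omega> * complex_of_real r)
          * (complex_of_real (1 / sqrt (r^2 + a^2)) * u (rs r)))"

end

theory Submission
  imports Defs "HOL-Real_Asymp.Real_Asymp"
begin

lemma norm_cpow: "norm (cpow x c) = exp (Re c * ln x)"
  by (simp add: cpow_def)

lemma norm_exp_cof: "norm (exp (c * complex_of_real t)) = exp (Re c * t)"
  by simp

lemma exp_int:
  assumes "\<alpha> > 0"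
  shows "set_integrable lborel {rp<..} (\<lambda>r::real. exp (-\<alpha>*(r-rp)))"
proof -
  have "(\<lambda>x. exp (-\<alpha>*x)) integrable_on {rp..}"
    using integrable_on_exp_minus_to_infinity[OF assms] by blast
  moreover have eq: "(\<lambda>x. exp (-\<alpha>*(x-rp))) = (\<lambda>x. exp (\<alpha>*rp) * exp (-\<alpha>*x))"
    by (auto simp: mult_exp_exp algebra_simps)
  ultimately have "(\<lambda>x. exp (-\<alpha>*(x-rp))) integrable_on {rp..}" by simp
  hence "(\<lambda>x. exp (-\<alpha>*(x-rp))) absolutely_integrable_on {rp..}"
    by (intro nonnegative_absolutely_integrable_1) auto
  hence "set_integrable lebesgue {rp..} (\<lambda>x. exp (-\<alpha>*(x-rp)))" by simp
  hence "set_integrable lborel {rp..} (\<lambda>x. exp (-\<alpha>*(x-rp)))"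
    unfolding set_integrable_def
    by (subst (asm) integrable_completion) (auto intro!: borel_measurable_continuous_on_indicator continuous_intros)
  thus ?thesis by (rule set_integrable_subset) auto
qed

lemma dom:
  fixes f :: "real \<Rightarrow> complex"
  assumes "continuous_on {rp<..} f" "set_integrable lborel {rp<..} (D::real\<Rightarrow>real)"
    "\<And>r. r>rp \<Longrightarrow> norm (f r) \<le> D r"
  shows "set_integrable lborel {rp<..} f"
    "norm (LINT r:{rp<..}|lborel. f r) \<le> (LINT r:{rp<..}|lborel. D r)"
proof -
  show i: "set_integrable lborel {rp<..} f"
    apply (rule set_integrable_bound[OF assms(2)])
    using set_measurable_continuous_on[OF _ assms(1)] apply (simp add: set_borel_measurable_def)
    using assms(3) by (auto intro!: AE_I2 order.trans[OF _ abs_ge_self])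
  have "norm (LINT r:{rp<..}|lborel. f r) \<le> (LINT r:{rp<..}|lborel. norm (f r))"
    by (rule set_integral_norm_bound[OF i])
  also have "\<dots> \<le> (LINT r:{rp<..}|lborel. D r)"
    apply (rule set_integral_mono)
    using i assms by (auto simp: set_integrable_norm)
  finally show "norm (LINT r:{rp<..}|lborel. f r) \<le> (LINT r:{rp<..}|lborel. D r)" .
qed

lemma Pk:
  fixes c :: complex
  assumes kappa: "kk > 0" and sg: "sg > 0" and rmdef: "rm = rp - kk" and cRe: "Re c = -2* sg / kk"
    and x: "x \<ge> rp" and r: "r > rp"
  shows "norm (exp (c * of_real ((x-rm)*(r-rm)))) \<le> exp (-2* sg*(x-rp)) * exp (-2* sg*(r-rp))"
proof -
  have t: "(x-rm)*(r-rm) \<ge> kk*((x-rp)+(r-rp))"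
  proof -
    have "(x-rm)*(r-rm) = (x-rp)*(r-rp) + kk*((x-rp)+(r-rp)) + kk*kk"
      unfolding rmdef by (simp add: algebra_simps)
    moreover have "(x-rp)*(r-rp) \<ge> 0" using x r by simp
    moreover have "kk*kk \<ge> 0" by simp
    ultimately show ?thesis by linarith
  qed
  have "Re c * ((x-rm)*(r-rm)) = -2* sg*((x-rm)*(r-rm)) / kk" using cRe by simp
  also have "\<dots> \<le> -2* sg*(kk*((x-rp)+(r-rp))) / kk"
    using t sg kappa by (intro divide_right_mono) auto
  also have "\<dots> = -2* sg*(x-rp) + -2* sg*(r-rp)" using kappa by (simp add: field_simps)
  finally have "Re c * ((x-rm)*(r-rm)) \<le> -2* sg*(x-rp) + -2* sg*(r-rp)" .
  hence "exp (Re c * ((x-rm)*(r-rm))) \<le> exp (-2* sg*(x-rp) + -2* sg*(r-rp))" by (subst exp_le_cancel_iff) linarith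
  thus ?thesis by (simp only: norm_exp_cof exp_add)
qed

lemma Prho:
  fixes ee kk rm rp r :: real
  assumes "ee > 0" "kk > 0" "rm = rp - kk" "r > rp"
  shows "r - rm \<le> (1/ee + kk) * exp (ee*(r-rp))"
proof -
  have "1 + ee*(r-rp) \<le> exp (ee*(r-rp))" using exp_ge_add_one_self[of "ee*(r-rp)"] by linarith
  hence a: "r - rp \<le> exp (ee*(r-rp)) / ee" using assms by (simp add: field_simps)
  have b: "kk \<le> kk * exp (ee*(r-rp))" using assms by simp
  have "r - rm = (r-rp) + kk" using assms by simp
  also have "\<dots> \<le> exp (ee*(r-rp)) / ee + kk * exp (ee*(r-rp))" using a b by linarith
  also have "\<dots> = (1/ee + kk) * exp (ee*(r-rp))" by (simp add: field_simps)
  finally show ?thesis .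
qed

lemma Fbound:
  fixes c :: complex and g :: "real \<Rightarrow> complex"
  assumes kappa: "kk > 0" and sg: "sg > 0" and eps: "0 < ee" "ee \<le> sg/8"
    and rmdef: "rm = rp - kk" and cRe: "Re c = -2* sg / kk"
    and gbd: "\<And>r. r > rp \<Longrightarrow> norm (g r) \<le> B * exp ((sg+ee)*(r-rp))"
    and x: "x \<ge> rp" and r: "r > rp"
  shows "norm (exp (c * of_real ((x-rm)*(r-rm))) * g r) \<le> B * exp (-2* sg*(x-rp)) * exp (-(sg-ee)*(r-rp))"
proof -
  have "0 \<le> B * exp ((sg+ee)*(rp+1-rp))" using gbd[of "rp+1"] norm_ge_zero[of "g (rp+1)"] by linarith
  hence B: "B \<ge> 0" by (simp add: zero_le_mult_iff)
  have "norm (exp (c * of_real ((x-rm)*(r-rm))) * g r) = norm (exp (c * of_real ((x-rm)*(r-rm)))) * norm (g r)"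
    by (simp add: norm_mult)
  also have "\<dots> \<le> (exp (-2* sg*(x-rp)) * exp (-2* sg*(r-rp))) * (B * exp ((sg+ee)*(r-rp)))"
    by (intro mult_mono Pk[OF kappa sg rmdef cRe x r] gbd r) auto
  also have "\<dots> = B * exp (-2* sg*(x-rp)) * (exp (-2* sg*(r-rp)) * exp ((sg+ee)*(r-rp)))"
    by (simp add: ac_simps)
  also have "exp (-2* sg*(r-rp)) * exp ((sg+ee)*(r-rp)) = exp (-(sg-ee)*(r-rp))"
    by (simp add: exp_add[symmetric] algebra_simps)
  finally show ?thesis by simp
qed

lemma expb: "norm (exp z - 1 - z) \<le> exp (norm z) * norm z ^ 2" for z :: complex
proof -
  have "norm (exp z - (\<Sum>i\<le>1. z ^ i / fact i)) \<le> exp (norm z) * (norm z ^ Suc 1) / fact 1"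
    by (rule Taylor_exp_field)
  moreover have "(\<Sum>i\<le>1. z ^ i / fact i) = 1 + z" by (simp add: atMost_Suc)
  ultimately show ?thesis by (simp add: diff_diff_eq power2_eq_square)
qed

lemma B2:
  fixes c :: complex and g :: "real \<Rightarrow> complex"
  assumes kappa: "kk > 0" and sg: "sg > 0" and eps: "0 < ee" "ee \<le> sg/8"
    and rmdef: "rm = rp - kk" and cRe: "Re c = -2* sg / kk"
    and gbd: "\<And>r. r > rp \<Longrightarrow> norm (g r) \<le> B * exp ((sg+ee)*(r-rp))"
    and x: "x \<ge> rp" and r: "r > rp"
  shows "norm (c * of_real (r-rm) * (exp (c * of_real ((x-rm)*(r-rm))) * g r)) \<le> (norm c * (1/ee+kk) * B * exp (-2* sg*(x-rp))) * exp (-(sg/2)*(r-rp))"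
proof -
  have "0 \<le> B * exp ((sg+ee)*(rp+1-rp))" using gbd[of "rp+1"] norm_ge_zero[of "g (rp+1)"] by linarith
  hence B: "B \<ge> 0" by (simp add: zero_le_mult_iff)
  have rr: "r - rm > 0" using r rmdef kappa by simp
  have "norm (c * of_real (r-rm) * (exp (c * of_real ((x-rm)*(r-rm))) * g r))
      = norm c * (r-rm) * norm (exp (c * of_real ((x-rm)*(r-rm))) * g r)"
    using rr by (simp add: norm_mult del: of_real_diff)
  also have "\<dots> \<le> norm c * ((1/ee+kk) * exp (ee*(r-rp))) * (B * exp (-2* sg*(x-rp)) * exp (-(sg-ee)*(r-rp)))"
    using rr eps kappa by (intro mult_mono Fbound[OF kappa sg eps rmdef cRe gbd x r] Prho[OF eps(1) kappa rmdef r] mult_left_mono) auto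
  also have "\<dots> = norm c * (1/ee+kk) * B * exp (-2* sg*(x-rp)) * (exp (ee*(r-rp)) * exp (-(sg-ee)*(r-rp)))"
    by (simp add: ac_simps)
  also have "exp (ee*(r-rp)) * exp (-(sg-ee)*(r-rp)) \<le> exp (-(sg/2)*(r-rp))"
  proof -
    have "(2*ee-sg)*(r-rp) \<le> -(sg/2)*(r-rp)" using eps r by (intro mult_right_mono) auto
    hence "ee*(r-rp) + -(sg-ee)*(r-rp) \<le> -(sg/2)*(r-rp)" by (simp add: algebra_simps)
    thus ?thesis unfolding exp_add[symmetric] by simp
  qed
  hence "norm c * (1/ee+kk) * B * exp (-2* sg*(x-rp)) * (exp (ee*(r-rp)) * exp (-(sg-ee)*(r-rp)))
       \<le> norm c * (1/ee+kk) * B * exp (-2* sg*(x-rp)) * exp (-(sg/2)*(r-rp))"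
    using B eps kappa by (intro mult_left_mono) auto
  finally show ?thesis .
qed

lemma core_bounds:
  fixes c :: complex and g :: "real \<Rightarrow> complex"
  assumes kappa: "kk > 0" and sg: "sg > 0" and eps: "0 < ee" "ee \<le> sg/8"
    and rmdef: "rm = rp - kk" and cRe: "Re c = -2* sg / kk"
    and gcont: "continuous_on {rp<..} g"
    and gbd: "\<And>r. r > rp \<Longrightarrow> norm (g r) \<le> B * exp ((sg+ee)*(r-rp))"
  shows "\<exists>C. \<forall>x\<ge>rp. norm (LINT r:{rp<..}|lborel. exp (c * of_real ((x-rm)*(r-rm))) * g r) \<le> C * exp (-2* sg*(x-rp))
          \<and> norm (LINT r:{rp<..}|lborel. c * of_real (r-rm) * (exp (c * of_real ((x-rm)*(r-rm))) * g r)) \<le> C * exp (-2* sg*(x-rp))"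
proof -
  define D where "D = (\<lambda>r::real. exp (-(sg/2)*(r-rp)))"
  have Dint: "set_integrable lborel {rp<..} D" unfolding D_def using exp_int[of "sg/2" rp] sg by simp
  define L where "L = (LINT r:{rp<..}|lborel. D r)"
  define C1 where "C1 = B * L"
  define C2 where "C2 = norm c * (1/ee+kk) * B * L"
  have "0 \<le> B * exp ((sg+ee)*(rp+1-rp))" using gbd[of "rp+1"] norm_ge_zero[of "g (rp+1)"] by linarith
  hence B: "B \<ge> 0" by (simp add: zero_le_mult_iff)
  have main: "norm (LINT r:{rp<..}|lborel. exp (c * of_real ((x-rm)*(r-rm))) * g r) \<le> C1 * exp (-2* sg*(x-rp))
          \<and> norm (LINT r:{rp<..}|lborel. c * of_real (r-rm) * (exp (c * of_real ((x-rm)*(r-rm))) * g r)) \<le> C2 * exp (-2* sg*(x-rp))"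
    if x: "x \<ge> rp" for x
  proof
    have cont1: "continuous_on {rp<..} (\<lambda>r. exp (c * of_real ((x-rm)*(r-rm))) * g r)"
      by (intro continuous_intros gcont)
    have cont2: "continuous_on {rp<..} (\<lambda>r. c * of_real (r-rm) * (exp (c * of_real ((x-rm)*(r-rm))) * g r))"
      by (intro continuous_intros gcont)
    have b1: "norm (exp (c * of_real ((x-rm)*(r-rm))) * g r) \<le> (B * exp (-2* sg*(x-rp))) * D r"
      if r: "r > rp" for r
    proof -
      have "norm (exp (c * of_real ((x-rm)*(r-rm))) * g r) \<le> B * exp (-2* sg*(x-rp)) * exp (-(sg-ee)*(r-rp))"
        by (rule Fbound[OF kappa sg eps rmdef cRe gbd x r])
      also have "\<dots> \<le> B * exp (-2* sg*(x-rp)) * D r"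
      proof -
        have "-(sg-ee)*(r-rp) \<le> -(sg/2)*(r-rp)" using eps r by (intro mult_right_mono) auto
        hence "exp (-(sg-ee)*(r-rp)) \<le> D r" by (simp add: D_def)
        thus ?thesis using B by (intro mult_left_mono) auto
      qed
      finally show ?thesis .
    qed
    have b2: "norm (c * of_real (r-rm) * (exp (c * of_real ((x-rm)*(r-rm))) * g r)) \<le> (norm c * (1/ee+kk) * B * exp (-2* sg*(x-rp))) * D r"
      if r: "r > rp" for r
      using B2[OF kappa sg eps rmdef cRe gbd x r] unfolding D_def .
    show "norm (LINT r:{rp<..}|lborel. exp (c * of_real ((x-rm)*(r-rm))) * g r) \<le> C1 * exp (-2* sg*(x-rp))"
      using dom(2)[OF cont1 set_integrable_mult_right[OF Dint] b1] unfolding C1_def L_def by (simp add: ac_simps)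
    show "norm (LINT r:{rp<..}|lborel. c * of_real (r-rm) * (exp (c * of_real ((x-rm)*(r-rm))) * g r)) \<le> C2 * exp (-2* sg*(x-rp))"
      using dom(2)[OF cont2 set_integrable_mult_right[OF Dint] b2] unfolding C2_def L_def by (simp add: ac_simps)
  qed
  show ?thesis
  proof (intro exI[of _ "max C1 C2"] allI impI conjI)
    fix x assume x: "x \<ge> rp"
    show "norm (LINT r:{rp<..}|lborel. exp (c * of_real ((x-rm)*(r-rm))) * g r) \<le> max C1 C2 * exp (-2* sg*(x-rp))"
      using main[OF x] by (smt (verit) exp_gt_zero mult_right_mono max.cobounded1)
    show "norm (LINT r:{rp<..}|lborel. c * of_real (r-rm) * (exp (c * of_real ((x-rm)*(r-rm))) * g r)) \<le> max C1 C2 * exp (-2* sg*(x-rp))"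
      using main[OF x] by (smt (verit) exp_gt_zero mult_right_mono max.cobounded2)
  qed
qed

lemma core_deriv:
  fixes c :: complex and g :: "real \<Rightarrow> complex"
  assumes kappa: "kk > 0" and sg: "sg > 0" and eps: "0 < ee" "ee \<le> sg/8"
    and rmdef: "rm = rp - kk" and cRe: "Re c = -2* sg / kk"
    and gcont: "continuous_on {rp<..} g"
    and gbd: "\<And>r. r > rp \<Longrightarrow> norm (g r) \<le> B * exp ((sg+ee)*(r-rp))"
    and x: "x > rp"
  shows "((\<lambda>t. LINT r:{rp<..}|lborel. exp (c * of_real ((t-rm)*(r-rm))) * g r) has_vector_derivative
          (LINT r:{rp<..}|lborel. c * of_real (r-rm) * (exp (c * of_real ((x-rm)*(r-rm))) * g r))) (at x)"
proof -
  define F where "F = (\<lambda>t r. exp (c * of_real ((t-rm)*(r-rm))) * g r)"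
  define I where "I = (\<lambda>t. LINT r:{rp<..}|lborel. F t r)"
  define Jf where "Jf = (\<lambda>r. c * of_real (r-rm) * F x r)"
  define J where "J = (LINT r:{rp<..}|lborel. Jf r)"
  define D where "D = (\<lambda>r::real. exp (-(sg/2)*(r-rp)))"
  have Dint: "set_integrable lborel {rp<..} D" unfolding D_def using exp_int[of "sg/2" rp] sg by simp
  define L where "L = (LINT r:{rp<..}|lborel. D r)"
  have "0 \<le> B * exp ((sg+ee)*(rp+1-rp))" using gbd[of "rp+1"] norm_ge_zero[of "g (rp+1)"] by linarith
  hence B: "B \<ge> 0" by (simp add: zero_le_mult_iff)
  define h0 where "h0 = ee / (norm c + 1)"
  have h0: "h0 > 0" unfolding h0_def using eps norm_ge_zero[of c] by (intro divide_pos_pos) linarith+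
  have ch0: "norm c * h0 \<le> ee"
  proof -
    have cpos: "norm c + 1 > 0" by (smt (verit) norm_ge_zero)
    have "norm c * h0 = ee * (norm c / (norm c + 1))" unfolding h0_def by (simp add: field_simps)
    also have "\<dots> \<le> ee * 1" using eps cpos by (intro mult_left_mono) (auto simp: divide_le_eq)
    finally show ?thesis by simp
  qed
  define K0 where "K0 = norm c ^ 2 * (1/ee+kk)^2 * exp (ee*kk) * B"
  have cont: "continuous_on {rp<..} (F t)" for t
    unfolding F_def by (intro continuous_intros gcont)
  have Fx_bd: "norm (F x r) \<le> B * exp (-(sg-ee)*(r-rp))" if r: "r > rp" for r
  proof -
    have "norm (F x r) \<le> B * exp (-2* sg*(x-rp)) * exp (-(sg-ee)*(r-rp))"
      unfolding F_def using x by (intro Fbound[OF kappa sg eps rmdef cRe gbd _ r]) auto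
    also have "\<dots> \<le> B * 1 * exp (-(sg-ee)*(r-rp))"
      using B sg x by (intro mult_right_mono mult_left_mono) auto
    finally show ?thesis by simp
  qed
  have shift: "F (x+h) r = F x r * exp (c * of_real h * of_real (r-rm))" for h r
  proof -
    have "c * of_real ((x+h-rm)*(r-rm)) = c * of_real ((x-rm)*(r-rm)) + c * of_real h * of_real (r-rm)"
      by (simp add: algebra_simps)
    thus ?thesis unfolding F_def by (simp add: exp_add ac_simps)
  qed
  have zb: "norm (c * of_real h * of_real (r-rm)) \<le> ee * (r - rm)" if h: "\<bar>h\<bar> \<le> h0" and r: "r > rp" for h r
  proof -
    have rr: "r - rm > 0" using r rmdef kappa by simp
    have "norm (c * of_real h * of_real (r-rm)) = (norm c * \<bar>h\<bar>) * (r - rm)"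
      using rr by (simp add: norm_mult del: of_real_diff)
    also have "\<dots> \<le> (norm c * h0) * (r - rm)" using rr h by (intro mult_right_mono mult_left_mono) auto
    also have "\<dots> \<le> ee * (r - rm)" using rr ch0 by (intro mult_right_mono) auto
    finally show ?thesis .
  qed
  have intFh: "set_integrable lborel {rp<..} (F (x+h))" if h: "\<bar>h\<bar> \<le> h0" for h
  proof (rule dom(1)[OF cont set_integrable_mult_right[OF Dint, of "B * exp (ee*kk)"]])
    fix r assume r: "r > rp"
    have "norm (F (x+h) r) = norm (F x r) * norm (exp (c * of_real h * of_real (r-rm)))"
      by (simp add: shift norm_mult)
    also have "\<dots> \<le> (B * exp (-(sg-ee)*(r-rp))) * exp (ee * (r - rm))"
      using Fx_bd[OF r] zb[OF h r] B by (intro mult_mono order.trans[OF norm_exp]) auto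
    also have "\<dots> = B * (exp (-(sg-ee)*(r-rp)) * exp (ee * (r - rm)))" by (simp add: ac_simps)
    also have "exp (-(sg-ee)*(r-rp)) * exp (ee * (r - rm)) = exp (ee*kk) * exp (-(sg-2*ee)*(r-rp))"
      unfolding exp_add[symmetric] rmdef by (rule arg_cong[where f=exp]) (simp add: algebra_simps)
    also have "B * (exp (ee*kk) * exp (-(sg-2*ee)*(r-rp))) = B * exp (ee*kk) * exp (-(sg-2*ee)*(r-rp))" by (simp add: ac_simps)
    also have "\<dots> \<le> B * exp (ee*kk) * D r"
    proof -
      have "-(sg-2*ee)*(r-rp) \<le> -(sg/2)*(r-rp)" using eps r by (intro mult_right_mono) auto
      hence "exp (-(sg-2*ee)*(r-rp)) \<le> D r" by (simp add: D_def)
      thus ?thesis using B by (intro mult_left_mono) auto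
    qed
    finally show "norm (F (x+h) r) \<le> B * exp (ee*kk) * D r" .
  qed
  have intFx: "set_integrable lborel {rp<..} (F x)" using intFh[of 0] h0 by simp
  have intJ: "set_integrable lborel {rp<..} Jf"
  proof (rule dom(1)[OF _ set_integrable_mult_right[OF Dint, of "norm c * (1/ee+kk) * B * exp (-2* sg*(x-rp))"]])
    show "continuous_on {rp<..} Jf" unfolding Jf_def F_def by (intro continuous_intros gcont)
    fix r assume r: "r > rp"
    show "norm (Jf r) \<le> norm c * (1/ee+kk) * B * exp (-2* sg*(x-rp)) * D r"
      unfolding Jf_def F_def D_def using x by (intro B2[OF kappa sg eps rmdef cRe gbd _ r]) auto
  qed
  have err: "norm (I (x+h) - I x - h *\<^sub>R J) \<le> h^2 * K0 * L" if h: "\<bar>h\<bar> \<le> h0" for h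
  proof -
    define E where "E = (\<lambda>r. F x r * (exp (c * of_real h * of_real (r-rm)) - 1 - c * of_real h * of_real (r-rm)))"
    have Eeq: "E r = F (x+h) r - F x r - h *\<^sub>R Jf r" for r
      unfolding E_def Jf_def shift by (simp add: scaleR_conv_of_real algebra_simps)
    have "I (x+h) - I x - h *\<^sub>R J = (LINT r:{rp<..}|lborel. F (x+h) r - F x r - h *\<^sub>R Jf r)"
    proof -
      have i1: "set_integrable lborel {rp<..} (\<lambda>r. F (x+h) r - F x r)" by (rule set_integral_diff(1)[OF intFh[OF h] intFx])
      have i2: "set_integrable lborel {rp<..} (\<lambda>r. h *\<^sub>R Jf r)" using intJ by simp
      have "(LINT r:{rp<..}|lborel. F (x+h) r - F x r - h *\<^sub>R Jf r)
          = (LINT r:{rp<..}|lborel. F (x+h) r - F x r) - (LINT r:{rp<..}|lborel. h *\<^sub>R Jf r)"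
        by (rule set_integral_diff(2)[OF i1 i2])
      also have "\<dots> = I (x+h) - I x - h *\<^sub>R J"
        unfolding I_def J_def set_integral_diff(2)[OF intFh[OF h] intFx] set_integral_scaleR_right ..
      finally show ?thesis by simp
    qed
    also have "\<dots> = (LINT r:{rp<..}|lborel. E r)" by (simp add: Eeq)
    also have "norm \<dots> \<le> (LINT r:{rp<..}|lborel. (h^2 * K0) * D r)"
    proof (rule dom(2)[OF _ set_integrable_mult_right[OF Dint]])
      show "continuous_on {rp<..} E" unfolding E_def F_def by (intro continuous_intros gcont)
      fix r assume r: "r > rp"
      define z where "z = c * of_real h * of_real (r-rm)"
      have rr: "r - rm > 0" using r rmdef kappa by simp
      have nz: "norm z \<le> norm c * \<bar>h\<bar> * ((1/ee+kk) * exp (ee*(r-rp)))"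
      proof -
        have "norm z = (norm c * \<bar>h\<bar>) * (r - rm)"
          unfolding z_def using rr by (simp add: norm_mult del: of_real_diff)
        also have "\<dots> \<le> (norm c * \<bar>h\<bar>) * ((1/ee+kk) * exp (ee*(r-rp)))"
          by (intro mult_left_mono Prho[OF eps(1) kappa rmdef r]) auto
        finally show ?thesis .
      qed
      have "norm (E r) = norm (F x r) * norm (exp z - 1 - z)" unfolding E_def z_def by (simp add: norm_mult)
      also have "\<dots> \<le> (B * exp (-(sg-ee)*(r-rp))) * (exp (ee * (r - rm)) * (norm c * \<bar>h\<bar> * ((1/ee+kk) * exp (ee*(r-rp))))^2)"
      proof -
        have "exp (norm z) * norm z ^ 2 \<le> exp (ee * (r - rm)) * (norm c * \<bar>h\<bar> * ((1/ee+kk) * exp (ee*(r-rp))))^2"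
          using zb[OF h r] nz unfolding z_def[symmetric] by (intro mult_mono power_mono) auto
        hence "norm (exp z - 1 - z) \<le> exp (ee * (r - rm)) * (norm c * \<bar>h\<bar> * ((1/ee+kk) * exp (ee*(r-rp))))^2"
          using expb[of z] by linarith
        thus ?thesis using Fx_bd[OF r] B by (intro mult_mono) auto
      qed
      also have "\<dots> = (norm c^2 * h^2 * (1/ee+kk)^2 * B) * (exp (-(sg-ee)*(r-rp)) * exp (ee * (r - rm)) * exp (ee*(r-rp))^2)"
        by (simp add: power_mult_distrib power2_abs ac_simps)
      also have "exp (-(sg-ee)*(r-rp)) * exp (ee * (r - rm)) * exp (ee*(r-rp))^2 = exp (ee*kk) * exp (-(sg-4*ee)*(r-rp))"
        unfolding power2_eq_square exp_add[symmetric] rmdef by (rule arg_cong[where f=exp]) (simp add: algebra_simps)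
      also have "(norm c^2 * h^2 * (1/ee+kk)^2 * B) * (exp (ee*kk) * exp (-(sg-4*ee)*(r-rp))) = h^2 * K0 * exp (-(sg-4*ee)*(r-rp))"
        unfolding K0_def by (simp add: ac_simps)
      also have "h^2 * K0 * exp (-(sg-4*ee)*(r-rp)) \<le> h^2 * K0 * D r"
      proof -
        have "-(sg-4*ee)*(r-rp) \<le> -(sg/2)*(r-rp)" using eps r by (intro mult_right_mono) auto
        hence "exp (-(sg-4*ee)*(r-rp)) \<le> D r" by (simp add: D_def)
        thus ?thesis using B unfolding K0_def by (intro mult_left_mono) auto
      qed
      finally show "norm (E r) \<le> h^2 * K0 * D r" .
    qed
    also have "\<dots> = h^2 * K0 * L" unfolding L_def by simp
    finally show ?thesis .
  qed
  have lim: "((\<lambda>h. norm (I (x+h) - I x - h *\<^sub>R J) / norm h) \<longlongrightarrow> 0) (at 0)"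
  proof (rule tendsto_sandwich[where f="\<lambda>h. 0" and h="\<lambda>h. \<bar>h\<bar> * K0 * L"])
    show "\<forall>\<^sub>F h in at 0. 0 \<le> norm (I (x+h) - I x - h *\<^sub>R J) / norm h" by simp
    show "\<forall>\<^sub>F h in at 0. norm (I (x+h) - I x - h *\<^sub>R J) / norm h \<le> \<bar>h\<bar> * K0 * L"
      unfolding eventually_at
    proof (intro exI[of _ h0] conjI ballI impI)
      fix h :: real assume "h \<noteq> 0 \<and> dist h 0 < h0"
      hence h: "\<bar>h\<bar> \<le> h0" "h \<noteq> 0" by auto
      have e2: "h^2 * K0 * L = \<bar>h\<bar> * (\<bar>h\<bar> * K0 * L)"
        by (metis abs_mult_self_eq mult.assoc power2_eq_square)
      have "norm (I (x+h) - I x - h *\<^sub>R J) / norm h \<le> \<bar>h\<bar> * (\<bar>h\<bar> * K0 * L) / \<bar>h\<bar>"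
        using err[OF h(1)] h unfolding real_norm_def e2 by (intro divide_right_mono) auto
      also have "\<dots> = \<bar>h\<bar> * K0 * L" using h by simp
      finally show "norm (I (x+h) - I x - h *\<^sub>R J) / norm h \<le> \<bar>h\<bar> * K0 * L" .
    qed (use h0 in auto)
    show "((\<lambda>h. \<bar>h\<bar> * K0 * L) \<longlongrightarrow> 0) (at 0)"
      by (auto intro!: tendsto_eq_intros)
  qed auto
  have "(I has_vector_derivative J) (at x)"
    unfolding has_vector_derivative_def has_derivative_at
    using lim by (auto intro: bounded_linear_scaleR_left)
  thus ?thesis unfolding I_def J_def Jf_def F_def .
qed

lemma cont_bound:
  fixes f :: "real \<Rightarrow> 'a::real_normed_vector"
  assumes "continuous_on {a..b} f"
  shows "\<exists>B. \<forall>x\<in>{a..b}. norm (f x) \<le> B"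
proof -
  have "compact (f ` {a..b})" by (rule compact_continuous_image[OF assms compact_Icc])
  hence "bounded (f ` {a..b})" by (rule compact_imp_bounded)
  thus ?thesis unfolding bounded_iff by auto
qed

lemma three_region:
  fixes h :: "real \<Rightarrow> complex"
  assumes cont: "continuous_on {rp<..} h"
    and near: "\<exists>\<delta>>0. \<exists>B1. \<forall>r. rp < r \<and> r < rp + \<delta> \<longrightarrow> norm (h r) \<le> B1"
    and far: "\<exists>R B2. \<forall>r\<ge>R. norm (h r) \<le> B2 * exp (ee*(r-rp))"
    and ee: "ee \<ge> 0"
  shows "\<exists>B. \<forall>r>rp. norm (h r) \<le> B * exp (ee*(r-rp))"
proof -
  obtain \<delta> B1 where d: "\<delta> > 0" and B1: "\<And>r. rp < r \<Longrightarrow> r < rp + \<delta> \<Longrightarrow> norm (h r) \<le> B1"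
    using near by blast
  obtain R B2 where B2: "\<And>r. r \<ge> R \<Longrightarrow> norm (h r) \<le> B2 * exp (ee*(r-rp))" using far by blast
  have "continuous_on {rp+\<delta>..R} h" by (rule continuous_on_subset[OF cont]) (use d in auto)
  then obtain B3 where B3: "\<And>r. r \<in> {rp+\<delta>..R} \<Longrightarrow> norm (h r) \<le> B3" using cont_bound by blast
  define B where "B = max (max B1 B2) (max B3 0)"
  show ?thesis
  proof (intro exI[of _ B] allI impI)
    fix r assume r: "r > rp"
    have e1: "exp (ee*(r-rp)) \<ge> 1" using ee r by simp
    have B0: "B \<ge> 0" unfolding B_def by simp
    have Be: "B \<le> B * exp (ee*(r-rp))" using mult_left_mono[OF e1 B0] by simp
    have Bk: "k \<le> B \<Longrightarrow> k \<le> B * exp (ee*(r-rp))" for k using Be by linarith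
    show "norm (h r) \<le> B * exp (ee*(r-rp))"
    proof (cases "r < rp + \<delta>")
      case True
      thus ?thesis using B1[OF r True] by (intro Bk) (auto simp: B_def)
    next
      case False
      show ?thesis
      proof (cases "r \<ge> R")
        case True
        have "B2 * exp (ee*(r-rp)) \<le> B * exp (ee*(r-rp))"
          by (intro mult_right_mono) (auto simp: B_def)
        thus ?thesis using B2[OF True] by linarith
      next
        case F2: False
        thus ?thesis using B3[of r] False by (intro Bk) (auto simp: B_def)
      qed
    qed
  qed
qed

lemma asym:
  fixes f :: "real \<Rightarrow> 'a::real_normed_vector"
  assumes bd: "\<And>x. x > rp \<Longrightarrow> norm (f x) \<le> K * ((\<alpha> + \<gamma> * sqrt (x^2+a^2)) * ((x-rp) powr p * exp (-s*x)))"
    and rp: "rp > 0" and p: "p \<ge> 0" and s: "s > 0" and al: "\<alpha> \<ge> 0" and ga: "\<gamma> \<ge> 0" and K: "K \<ge> 0"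
  shows "\<exists>K. \<forall>\<^sub>F x in at_right rp. norm (f x) \<le> K * (x - rp) powr p"
    and "\<exists>K. \<forall>\<^sub>F x in at_top. norm (f x) \<le> K * exp (-s*x) * x powr (1 + p)"
proof -
  show "\<exists>K. \<forall>\<^sub>F x in at_right rp. norm (f x) \<le> K * (x - rp) powr p"
  proof (intro exI[of _ "K * (\<alpha> + \<gamma> * (rp + 1 + \<bar>a\<bar>))"])
    have "\<forall>\<^sub>F x in at_right rp. x \<in> {rp<..<rp+1}" by (rule eventually_at_right_real) simp
    thus "\<forall>\<^sub>F x in at_right rp. norm (f x) \<le> K * (\<alpha> + \<gamma> * (rp + 1 + \<bar>a\<bar>)) * (x - rp) powr p"
    proof eventually_elim
      case (elim x)
      have sq: "sqrt (x^2+a^2) \<le> rp + 1 + \<bar>a\<bar>"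
      proof -
        have "sqrt (x^2+a^2) \<le> sqrt (x^2) + sqrt (a^2)" by (rule sqrt_add_le_add_sqrt) auto
        thus ?thesis using elim rp by simp
      qed
      have e: "exp (-s*x) \<le> 1" using s elim rp by simp
      have pos: "0 \<le> \<alpha> + \<gamma> * (rp + 1 + \<bar>a\<bar>)" using al ga rp by (intro add_nonneg_nonneg mult_nonneg_nonneg) auto
      have "norm (f x) \<le> K * ((\<alpha> + \<gamma> * sqrt (x^2+a^2)) * ((x-rp) powr p * exp (-s*x)))" using bd elim by simp
      also have "\<dots> \<le> K * ((\<alpha> + \<gamma> * (rp + 1 + \<bar>a\<bar>)) * ((x-rp) powr p * 1))"
        using K al ga sq e pos
        by (intro mult_left_mono mult_mono add_left_mono) (auto intro: add_nonneg_nonneg)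
      finally show ?case by (simp add: ac_simps)
    qed
  qed
  show "\<exists>K. \<forall>\<^sub>F x in at_top. norm (f x) \<le> K * exp (-s*x) * x powr (1 + p)"
  proof (intro exI[of _ "K * (\<alpha> + \<gamma> * (1 + \<bar>a\<bar>))"])
    have "\<forall>\<^sub>F x in at_top. x \<ge> max 1 (rp+1)" by (rule eventually_ge_at_top)
    thus "\<forall>\<^sub>F x in at_top. norm (f x) \<le> K * (\<alpha> + \<gamma> * (1 + \<bar>a\<bar>)) * exp (-s*x) * x powr (1 + p)"
    proof eventually_elim
      case (elim x)
      have x1: "x \<ge> 1" "x > rp" using elim by auto
      have sq: "sqrt (x^2+a^2) \<le> (1 + \<bar>a\<bar>) * x"
      proof -
        have "sqrt (x^2+a^2) \<le> sqrt (x^2) + sqrt (a^2)" by (rule sqrt_add_le_add_sqrt) auto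
        also have "\<dots> = x + \<bar>a\<bar>" using x1 by simp
        also have "\<dots> \<le> (1 + \<bar>a\<bar>) * x"
        proof -
          have "\<bar>a\<bar> * 1 \<le> \<bar>a\<bar> * x" using x1 by (intro mult_left_mono) auto
          thus ?thesis by (simp add: algebra_simps)
        qed
        finally show ?thesis .
      qed
      have pa: "\<alpha> + \<gamma> * sqrt (x^2+a^2) \<le> (\<alpha> + \<gamma> * (1 + \<bar>a\<bar>)) * x"
      proof -
        have "\<alpha> * 1 \<le> \<alpha> * x" using al x1 by (intro mult_left_mono) auto
        moreover have "\<gamma> * sqrt (x^2+a^2) \<le> \<gamma> * ((1 + \<bar>a\<bar>) * x)" using ga sq by (intro mult_left_mono)
        ultimately show ?thesis by (simp add: algebra_simps)
      qed
      have pw: "(x-rp) powr p \<le> x powr p" using x1 rp p by (intro powr_mono2) auto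
      have "norm (f x) \<le> K * ((\<alpha> + \<gamma> * sqrt (x^2+a^2)) * ((x-rp) powr p * exp (-s*x)))" using bd x1 by simp
      also have "\<dots> \<le> K * (((\<alpha> + \<gamma> * (1 + \<bar>a\<bar>)) * x) * (x powr p * exp (-s*x)))"
        using K pa pw x1 al ga sq
        by (intro mult_left_mono mult_mono mult_right_mono) (auto intro: add_nonneg_nonneg)
      also have "\<dots> = K * (\<alpha> + \<gamma> * (1 + \<bar>a\<bar>)) * exp (-s*x) * (x * x powr p)" by (simp add: ac_simps)
      also have "x * x powr p = x powr (1 + p)" using x1 by (simp add: powr_add)
      finally show ?case .
    qed
  qed
qed

lemma basic:
  fixes M a :: real
  assumes M: "M > 0" and a: "\<bar>a\<bar> < M"
  shows "rplus M a > rminus M a" "rminus M a \<ge> 0" "rplus M a > 0"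
        "\<And>x. Delta M a x = (x - rplus M a)*(x - rminus M a)"
proof -
  have "\<bar>a\<bar>^2 < M^2" using a M by (intro power_strict_mono) auto
  hence a2: "a^2 < M^2" by simp
  define \<sigma> where "\<sigma> = sqrt (M^2 - a^2)"
  have sp: "\<sigma> > 0" unfolding \<sigma>_def using a2 by simp
  have "sqrt (M^2-a^2) \<le> sqrt (M^2)" by (rule real_sqrt_le_mono) simp
  hence sM: "\<sigma> \<le> M" unfolding \<sigma>_def using M by simp
  have s2: "\<sigma>^2 = M^2 - a^2" unfolding \<sigma>_def using a2 by simp
  show "rplus M a > rminus M a" "rminus M a \<ge> 0" "rplus M a > 0"
    unfolding rplus_def rminus_def \<sigma>_def[symmetric] using sp sM M by auto
  show "Delta M a x = (x - rplus M a)*(x - rminus M a)" for x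
    unfolding rplus_def rminus_def \<sigma>_def[symmetric] Delta_def
    using s2 by (simp add: algebra_simps power2_eq_square)
qed

lemma cpow_inv: "x > 0 \<Longrightarrow> cpow x c * cpow x (-c) = 1"
  unfolding cpow_def by (simp add: exp_minus[symmetric] exp_add[symmetric])

lemma continuous_on_cpow [continuous_intros]:
  assumes "continuous_on S f" "\<And>x. x \<in> S \<Longrightarrow> f x > 0"
  shows "continuous_on S (\<lambda>x. cpow (f x) c)"
  unfolding cpow_def using assms by (intro continuous_intros) force+

lemma cpow_deriv:
  assumes "x > rp"
  shows "((\<lambda>x. cpow (x - rp) b) has_vector_derivative cpow (x - rp) b * (b / complex_of_real (x - rp))) (at x)"
proof -
  have "((\<lambda>x. ln (x - rp)) has_real_derivative 1 / (x - rp)) (at x)"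
    using assms by (auto intro!: derivative_eq_intros)
  hence "((\<lambda>x. complex_of_real (ln (x - rp))) has_vector_derivative complex_of_real (1 / (x - rp))) (at x)"
    by (rule has_vector_derivative_of_real)
  hence "((\<lambda>x. b * complex_of_real (ln (x - rp))) has_vector_derivative b * complex_of_real (1 / (x - rp))) (at x)"
    by (rule has_vector_derivative_mult_right)
  from field_vector_diff_chain_at[OF this DERIV_exp]
  have "((\<lambda>x. exp (b * complex_of_real (ln (x - rp)))) has_vector_derivative
      b * complex_of_real (1 / (x - rp)) * exp (b * complex_of_real (ln (x - rp)))) (at x)"
    unfolding o_def .
  moreover have "b * complex_of_real (1 / (x - rp)) * exp (b * complex_of_real (ln (x - rp)))
     = exp (b * complex_of_real (ln (x - rp))) * (b / complex_of_real (x - rp))"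
    by (simp add: of_real_divide)
  ultimately show ?thesis unfolding cpow_def by (simp add: mult.commute)
qed

lemma Re_xi: "rplus M a \<noteq> rminus M a \<Longrightarrow> Re (xi_exp M a \<omega> m) = 2*M*rplus M a*Im \<omega> / (rplus M a - rminus M a)"
  unfolding xi_exp_def by (simp del: Re_divide)

lemma smooth_cont: "smooth_fun G \<Longrightarrow> continuous_on S G"
  unfolding smooth_fun_def
  by (metis continuous_at_imp_continuous_on has_vector_derivative_continuous)

lemma hbound:
  fixes M a :: real and \<omega> :: complex and m :: int and rs :: "real\<Rightarrow>real" and u du :: "real \<Rightarrow> complex"
  assumes M_pos: "M > 0" and a_lt: "\<bar>a\<bar> < M"
    and rs_mono: "strict_mono_on {rplus M a<..} rs"
    and rs_bij: "bij_betw rs {rplus M a<..} UNIV"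
    and rs_deriv: "\<And>r. r > rplus M a \<Longrightarrow>
        (rs has_real_derivative (r^2 + a^2) / Delta M a r) (at r)"
    and u_d1: "\<And>s. (u has_vector_derivative du s) (at s)"
    and bc_hor: "\<exists>G \<delta>. \<delta> > 0 \<and> smooth_fun (G :: real \<Rightarrow> complex) \<and>
        (\<forall>r. rplus M a < r \<and> r < rplus M a + \<delta> \<longrightarrow>
            G r = cpow (r - rplus M a) (- xi_exp M a \<omega> m) * u (rs r))"
    and bc_inf: "\<exists>C :: nat \<Rightarrow> complex. \<forall>N. \<exists>K. \<forall>\<^sub>F r in at_top.
        norm (u (rs r) - exp (\<i> * \<omega> * complex_of_real (rs r)) * (\<Sum>i\<le>N. C i * of_real (r powr (- real i))))
          \<le> K * r powr (- real (N + 1))"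
    and Im_pos: "Im \<omega> > 0"
    and ee: "ee > 0"
  shows "\<exists>B. \<forall>r>rplus M a. norm (cpow (r - rminus M a) (eta_exp M a \<omega> m) * cpow (r - rplus M a) (xi_exp M a \<omega> m)
            * (complex_of_real (1 / sqrt (r^2+a^2)) * u (rs r))) \<le> B * exp (ee * (r - rplus M a))"
proof -
  define rp where "rp = rplus M a"
  define rm where "rm = rminus M a"
  define \<xi> where "\<xi> = xi_exp M a \<omega> m"
  define \<eta> where "\<eta> = eta_exp M a \<omega> m"
  note bas = basic[OF M_pos a_lt, folded rp_def rm_def]
  have rprm: "rp > rm" "rm \<ge> 0" "rp > 0" using bas by auto
  have Rexi: "Re \<xi> > 0"
    unfolding \<xi>_def using Re_xi[of M a \<omega> m] rprm M_pos Im_pos unfolding rp_def[symmetric] rm_def[symmetric]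
    by (simp add: divide_pos_pos)
  define h where "h = (\<lambda>r. cpow (r - rm) \<eta> * cpow (r - rp) \<xi> * (complex_of_real (1 / sqrt (r^2+a^2)) * u (rs r)))"
  have ucont: "continuous_on {rp<..} (\<lambda>r. u (rs r))"
  proof (intro continuous_at_imp_continuous_on ballI)
    fix r assume "r \<in> {rp<..}"
    hence "isCont rs r" using rs_deriv unfolding rp_def by (auto intro: DERIV_isCont)
    moreover have "isCont u (rs r)" using u_d1 has_vector_derivative_continuous by blast
    ultimately show "isCont (\<lambda>r. u (rs r)) r" by (rule isCont_o2)
  qed
  have sqpos: "r > rp \<Longrightarrow> sqrt (r^2+a^2) > 0" for r using rprm
    by (intro real_sqrt_gt_zero) (auto intro: add_pos_nonneg)
  have hcont: "continuous_on {rp<..} h"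
    unfolding h_def using rprm sqpos by (intro continuous_intros ucont) auto
  have near: "\<exists>\<delta>>0. \<exists>B1. \<forall>r. rp < r \<and> r < rp + \<delta> \<longrightarrow> norm (h r) \<le> B1"
  proof -
    obtain G \<delta> where d: "\<delta> > 0" and G: "smooth_fun G"
      and Geq: "\<And>r. rp < r \<Longrightarrow> r < rp + \<delta> \<Longrightarrow> G r = cpow (r - rp) (- \<xi>) * u (rs r)"
      using bc_hor unfolding rp_def \<xi>_def by blast
    define \<psi> where "\<psi> = (\<lambda>r. cpow (r - rm) \<eta> * complex_of_real (1 / sqrt (r^2+a^2)) * G r)"
    have "continuous_on {rp..rp+1} \<psi>"
    proof -
      have "r \<in> {rp..rp+1} \<Longrightarrow> sqrt (r^2+a^2) > 0" for r using rprm
        by (intro real_sqrt_gt_zero) (auto intro: add_pos_nonneg)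
      thus ?thesis unfolding \<psi>_def using rprm by (intro continuous_intros smooth_cont[OF G]) auto
    qed
    then obtain B1 where B1: "\<And>r. r \<in> {rp..rp+1} \<Longrightarrow> norm (\<psi> r) \<le> B1" using cont_bound by blast
    have "\<forall>r. rp < r \<and> r < rp + min \<delta> 1 \<longrightarrow> norm (h r) \<le> B1"
    proof (intro allI impI)
      fix r assume r: "rp < r \<and> r < rp + min \<delta> 1"
      have ueq: "u (rs r) = cpow (r - rp) \<xi> * G r"
      proof -
        have rd: "rp < r" "r < rp + \<delta>" using r by auto
        have "cpow (r - rp) \<xi> * G r = cpow (r - rp) \<xi> * (cpow (r - rp) (- \<xi>) * u (rs r))"
          using Geq[OF rd] by simp
        also have "\<dots> = (cpow (r - rp) \<xi> * cpow (r - rp) (- \<xi>)) * u (rs r)" by (simp only: mult.assoc)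
        also have "\<dots> = u (rs r)" using cpow_inv[of "r - rp" \<xi>] r by simp
        finally show ?thesis by simp
      qed
      have hq: "h r = \<psi> r * (cpow (r - rp) \<xi> * cpow (r - rp) \<xi>)"
        unfolding h_def \<psi>_def ueq by (simp add: ac_simps)
      have c1: "norm (cpow (r - rp) \<xi>) \<le> 1"
      proof -
        have "ln (r - rp) < 0" using r by (intro ln_less_zero) auto
        hence "Re \<xi> * ln (r - rp) \<le> 0" using Rexi by (simp add: mult_pos_neg less_imp_le)
        thus ?thesis by (simp add: norm_cpow)
      qed
      have "norm (h r) = norm (\<psi> r) * (norm (cpow (r - rp) \<xi>) * norm (cpow (r - rp) \<xi>))"
        unfolding hq by (simp add: norm_mult)
      also have "\<dots> \<le> B1 * (1 * 1)"
      proof -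
        have B1r: "norm (\<psi> r) \<le> B1" using B1[of r] r by auto
        hence "0 \<le> B1" using norm_ge_zero order.trans by blast
        thus ?thesis using B1r c1 by (intro mult_mono) (auto intro: mult_le_one)
      qed
      finally show "norm (h r) \<le> B1" by simp
    qed
    thus ?thesis using d by (intro exI[of _ "min \<delta> 1"]) auto
  qed
  have far: "\<exists>R B2. \<forall>r\<ge>R. norm (h r) \<le> B2 * exp (ee*(r-rp))"
  proof -
    obtain C :: "nat \<Rightarrow> complex" where C: "\<And>N. \<exists>K. \<forall>\<^sub>F r in at_top.
        norm (u (rs r) - exp (\<i> * \<omega> * complex_of_real (rs r)) * (\<Sum>i\<le>N. C i * of_real (r powr (- real i))))
          \<le> K * r powr (- real (N + 1))" using bc_inf by blast
    obtain K where K: "\<forall>\<^sub>F r in at_top.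
        norm (u (rs r) - exp (\<i> * \<omega> * complex_of_real (rs r)) * (\<Sum>i\<le>0. C i * of_real (r powr (- real i))))
          \<le> K * r powr (- real (0 + 1))" using C[of 0] by blast
    obtain r0 where r0: "r0 > rp" "rs r0 = 0"
      using rs_bij unfolding bij_betw_def rp_def by (metis UNIV_I greaterThan_iff imageE)
    have lim: "((\<lambda>r. exp (Re \<eta> * ln (r - rm)) * exp (Re \<xi> * ln (r - rp)) / exp (ee*(r-rp))) \<longlongrightarrow> 0) at_top"
      using ee by real_asymp
    have ev1: "\<forall>\<^sub>F r in at_top. exp (Re \<eta> * ln (r - rm)) * exp (Re \<xi> * ln (r - rp)) / exp (ee*(r-rp)) < 1"
      using order_tendstoD(2)[OF lim, of 1] by simp
    have ev2: "\<forall>\<^sub>F r in at_top. r \<ge> max (r0 + 1) 1" by (rule eventually_ge_at_top)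
    have "\<forall>\<^sub>F r in at_top. norm (h r) \<le> (norm (C 0) + \<bar>K\<bar>) * exp (ee*(r-rp))"
      using K ev1 ev2
    proof eventually_elim
      case (elim r)
      have r1: "r \<ge> 1" "r > r0" using elim by auto
      have rp_r: "r > rp" using r1 r0 by simp
      have rspos: "rs r > 0"
        using strict_mono_onD[OF rs_mono, of r0 r] r0 r1 rp_r unfolding rp_def by simp
      have ne: "norm (exp (\<i> * \<omega> * complex_of_real (rs r))) \<le> 1"
        using rspos Im_pos by (simp add: mult_pos_pos less_imp_le)
      have sum: "(\<Sum>i\<le>0. C i * of_real (r powr (- real i))) = C 0" using r1 by simp
      have rpow: "r powr (- real (0 + 1)) = 1 / r" using r1 by (simp add: powr_neg_one)
      have Kb: "K * (1 / r) \<le> \<bar>K\<bar>"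
      proof -
        have "K * (1/r) \<le> \<bar>K\<bar> * (1/r)" using r1 by (intro mult_right_mono) auto
        also have "\<dots> \<le> \<bar>K\<bar> * 1" using r1 by (intro mult_left_mono) auto
        finally show ?thesis by simp
      qed
      have "norm (u (rs r)) \<le> norm (exp (\<i> * \<omega> * complex_of_real (rs r)) * C 0) + K * (1 / r)"
        using elim(1) unfolding sum rpow by (metis norm_triangle_sub order.trans add_left_mono)
      also have "\<dots> \<le> 1 * norm (C 0) + \<bar>K\<bar>"
      proof (rule add_mono)
        show "norm (exp (\<i> * \<omega> * complex_of_real (rs r)) * C 0) \<le> 1 * norm (C 0)"
          unfolding norm_mult by (rule mult_right_mono[OF ne]) simp
        show "K * (1/r) \<le> \<bar>K\<bar>" by (rule Kb)
      qed
      finally have nu: "norm (u (rs r)) \<le> norm (C 0) + \<bar>K\<bar>" by simp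
      have sq: "1 / sqrt (r^2+a^2) \<le> 1"
      proof -
        have "1 \<le> r*r" using r1 mult_mono[of 1 r 1 r] by simp
        hence "1 \<le> r^2+a^2" unfolding power2_eq_square by (smt (verit) zero_le_square)
        hence "1 \<le> sqrt (r^2+a^2)" by simp
        thus ?thesis by simp
      qed
      have P: "exp (Re \<eta> * ln (r - rm)) * exp (Re \<xi> * ln (r - rp)) \<le> exp (ee*(r-rp))"
        using elim(2) by (simp add: divide_less_eq less_imp_le)
      have "norm (h r) = exp (Re \<eta> * ln (r - rm)) * exp (Re \<xi> * ln (r - rp)) * ((1 / sqrt (r^2+a^2)) * norm (u (rs r)))"
        unfolding h_def using sqpos[OF rp_r] by (simp add: norm_mult norm_divide norm_cpow)
      also have "\<dots> \<le> exp (ee*(r-rp)) * (1 * (norm (C 0) + \<bar>K\<bar>))"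
        using P sq nu by (intro mult_mono) auto
      finally show ?case by (simp add: ac_simps)
    qed
    thus ?thesis unfolding eventually_at_top_linorder by blast
  qed
  have "\<exists>B. \<forall>r>rp. norm (h r) \<le> B * exp (ee*(r-rp))"
    by (rule three_region[OF hcont near far]) (use ee in simp)
  thus ?thesis unfolding h_def rp_def rm_def \<xi>_def \<eta>_def .
qed

theorem mainTheorem7:
  fixes M a :: real and \<omega> lam :: complex and m :: int
    and rs :: "real \<Rightarrow> real" and F :: "real \<Rightarrow> complex"
    and u du ddu :: "real \<Rightarrow> complex"
  assumes M_pos: "M > 0" and a_lt: "\<bar>a\<bar> < M"
    and rs_mono: "strict_mono_on {rplus M a<..} rs"
    and rs_bij: "bij_betw rs {rplus M a<..} UNIV"
    and rs_deriv: "\<And>r. r > rplus M a \<Longrightarrow>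
        (rs has_real_derivative (r^2 + a^2) / Delta M a r) (at r)"
    and F_smooth: "smooth_fun F"
    and F_supp: "\<exists>c d. rplus M a < c \<and> c \<le> d \<and> (\<forall>r. r \<notin> {c..d} \<longrightarrow> F r = 0)"
    and u_d1: "\<And>s. (u has_vector_derivative du s) (at s)"
    and u_d2: "\<And>s. (du has_vector_derivative ddu s) (at s)"
    and ode: "\<And>r. r > rplus M a \<Longrightarrow>
        ddu (rs r) + (\<omega>^2 - Vpot M a \<omega> m lam r) * u (rs r)
          = complex_of_real (Delta M a r / sqrt (r^2 + a^2)) * F r"
    and bc_hor: "\<exists>G \<delta>. \<delta> > 0 \<and> smooth_fun (G :: real \<Rightarrow> complex) \<and>
        (\<forall>r. rplus M a < r \<and> r < rplus M a + \<delta> \<longrightarrow>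
            G r = cpow (r - rplus M a) (- xi_exp M a \<omega> m) * u (rs r))"
    and bc_inf: "\<exists>C :: nat \<Rightarrow> complex. \<forall>N. \<exists>K. \<forall>\<^sub>F r in at_top.
        norm (u (rs r) - exp (\<i> * \<omega> * complex_of_real (rs r)) * (\<Sum>i\<le>N. C i * of_real (r powr (- real i))))
          \<le> K * r powr (- real (N + 1))"
    and Im_pos: "Im \<omega> > 0"
  shows "(\<exists>K. \<forall>\<^sub>F x in at_right (rplus M a).
            norm (whiting M a \<omega> m rs u x) \<le> K * (x - rplus M a) powr (2 * M * Im \<omega>))
       \<and> (\<exists>K. \<forall>\<^sub>F x in at_top.
            norm (whiting M a \<omega> m rs u x) \<le> K * exp (- Im \<omega> * x) * x powr (1 + 2 * M * Im \<omega>))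
       \<and> (\<exists>du_t :: real \<Rightarrow> complex.
            (\<forall>x > rplus M a. (whiting M a \<omega> m rs u has_vector_derivative du_t x) (at x))
          \<and> (\<exists>K. \<forall>\<^sub>F x in at_right (rplus M a).
               norm (complex_of_real (Delta M a x / (x^2 + a^2)) * du_t x) \<le> K * (x - rplus M a) powr (2 * M * Im \<omega>))
          \<and> (\<exists>K. \<forall>\<^sub>F x in at_top.
               norm (complex_of_real (Delta M a x / (x^2 + a^2)) * du_t x)
                 \<le> K * exp (- Im \<omega> * x) * x powr (1 + 2 * M * Im \<omega>)))"
proof -
  define rp where "rp = rplus M a"
  define rm where "rm = rminus M a"
  define \<xi> where "\<xi> = xi_exp M a \<omega> m"
  define \<eta> where "\<eta> = eta_exp M a \<omega> m"
  define sg where "sg = Im \<omega>"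
  define kk where "kk = rp - rm"
  define ee where "ee = sg / 8"
  define c where "c = 2 * \<i> * \<omega> / complex_of_real kk"
  define pp where "pp = 2 * M * sg"
  note bas = basic[OF M_pos a_lt, folded rp_def rm_def]
  have rprm: "rp > rm" "rm \<ge> 0" "rp > 0" using bas by auto
  have Dfac: "\<And>x. Delta M a x = (x - rp) * (x - rm)" using bas by auto
  have kappa: "kk > 0" unfolding kk_def using rprm by simp
  have sgp: "sg > 0" unfolding sg_def using Im_pos .
  have eps: "0 < ee" "ee \<le> sg/8" unfolding ee_def using sgp by auto
  have rmdef: "rm = rp - kk" unfolding kk_def by simp
  have cRe: "Re c = -2 * sg / kk" unfolding c_def sg_def by simp
  obtain B0 where B0: "\<And>r. r > rp \<Longrightarrow> norm (cpow (r - rm) \<eta> * cpow (r - rp) \<xi>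
            * (complex_of_real (1 / sqrt (r^2+a^2)) * u (rs r))) \<le> B0 * exp (ee * (r - rp))"
    using hbound[OF M_pos a_lt rs_mono rs_bij rs_deriv u_d1 bc_hor bc_inf Im_pos eps(1)]
    unfolding rp_def rm_def \<xi>_def \<eta>_def by blast
  define g where "g = (\<lambda>r. cpow (r - rm) \<eta> * cpow (r - rp) \<xi> * exp (- \<i> * \<omega> * complex_of_real r)
          * (complex_of_real (1 / sqrt (r^2 + a^2)) * u (rs r)))"
  have ucont: "continuous_on {rp<..} (\<lambda>r. u (rs r))"
  proof (intro continuous_at_imp_continuous_on ballI)
    fix r assume "r \<in> {rp<..}"
    hence "isCont rs r" using rs_deriv unfolding rp_def by (auto intro: DERIV_isCont)
    moreover have "isCont u (rs r)" using u_d1 has_vector_derivative_continuous by blast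
    ultimately show "isCont (\<lambda>r. u (rs r)) r" by (rule isCont_o2)
  qed
  have sqpos: "r > 0 \<Longrightarrow> sqrt (r^2+a^2) > 0" for r
    by (intro real_sqrt_gt_zero) (auto intro: add_pos_nonneg)
  have gcont: "continuous_on {rp<..} g"
    unfolding g_def using rprm sqpos by (intro continuous_intros ucont) auto
  have gbd: "\<And>r. r > rp \<Longrightarrow> norm (g r) \<le> (B0 * exp (sg * rp)) * exp ((sg+ee)*(r-rp))"
  proof -
    fix r assume r: "r > rp"
    have "g r = (cpow (r - rm) \<eta> * cpow (r - rp) \<xi> * (complex_of_real (1 / sqrt (r^2+a^2)) * u (rs r)))
           * exp (- \<i> * \<omega> * complex_of_real r)" unfolding g_def by (simp add: ac_simps)
    hence "norm (g r) = norm (cpow (r - rm) \<eta> * cpow (r - rp) \<xi> * (complex_of_real (1 / sqrt (r^2+a^2)) * u (rs r)))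
           * exp (sg * r)" by (simp only: norm_mult norm_exp_eq_Re) (simp add: sg_def)
    also have "\<dots> \<le> B0 * exp (ee * (r - rp)) * exp (sg * r)"
      using B0[OF r] by (intro mult_right_mono) auto
    also have "\<dots> = B0 * (exp (ee * (r - rp)) * exp (sg * r))" by (simp add: ac_simps)
    also have "exp (ee * (r - rp)) * exp (sg * r) = exp (sg * rp) * exp ((sg+ee)*(r-rp))"
      unfolding exp_add[symmetric] by (rule arg_cong[where f=exp]) (simp add: algebra_simps)
    also have "B0 * (exp (sg * rp) * exp ((sg+ee)*(r-rp))) = (B0 * exp (sg * rp)) * exp ((sg+ee)*(r-rp))" by (simp add: ac_simps)
    finally show "norm (g r) \<le> (B0 * exp (sg * rp)) * exp ((sg+ee)*(r-rp))" .
  qed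
  define I where "I = (\<lambda>x. LINT r:{rp<..}|lborel. exp (c * complex_of_real ((x-rm)*(r-rm))) * g r)"
  define J where "J = (\<lambda>x. LINT r:{rp<..}|lborel. c * complex_of_real (r-rm) * (exp (c * complex_of_real ((x-rm)*(r-rm))) * g r))"
  obtain C where C: "\<And>x. x \<ge> rp \<Longrightarrow> norm (I x) \<le> C * exp (-2 * sg * (x - rp)) \<and> norm (J x) \<le> C * exp (-2 * sg * (x - rp))"
    using core_bounds[OF kappa sgp eps rmdef cRe gcont gbd] unfolding I_def J_def by blast
  have C0: "C \<ge> 0"
  proof -
    have "0 \<le> C * exp (-2 * sg * (rp - rp))" using C[of rp] norm_ge_zero order.trans by blast
    thus ?thesis by simp
  qed
  have Ider: "\<And>x. x > rp \<Longrightarrow> (I has_vector_derivative J x) (at x)"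
    unfolding I_def J_def by (rule core_deriv[OF kappa sgp eps rmdef cRe gcont gbd])
  define \<beta> where "\<beta> = - 2 * \<i> * complex_of_real M * \<omega>"
  define A where "A = (\<lambda>x. complex_of_real (sqrt (x^2 + a^2)) * cpow (x - rp) \<beta> * exp (- \<i> * \<omega> * complex_of_real x))"
  define A' where "A' = (\<lambda>x. (complex_of_real (sqrt (x^2 + a^2)) * cpow (x - rp) \<beta>) * (exp (- \<i> * \<omega> * complex_of_real x) * (- \<i> * \<omega>))
      + (complex_of_real (sqrt (x^2 + a^2)) * (cpow (x - rp) \<beta> * (\<beta> / complex_of_real (x - rp)))
         + complex_of_real (x / sqrt (x^2 + a^2)) * cpow (x - rp) \<beta>) * exp (- \<i> * \<omega> * complex_of_real x))"
  have wI: "whiting M a \<omega> m rs u = (\<lambda>x. A x * I x)"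
    by (intro ext) (simp only: whiting_def A_def I_def c_def g_def rp_def rm_def \<xi>_def \<eta>_def kk_def \<beta>_def mult.assoc)
  have Ader: "(A has_vector_derivative A' x) (at x)" if x: "x > rp" for x
  proof -
    have dS: "((\<lambda>x. complex_of_real (sqrt (x^2 + a^2))) has_vector_derivative complex_of_real (x / sqrt (x^2 + a^2))) (at x)"
    proof (rule has_vector_derivative_of_real)
      have p: "x^2 + a^2 > 0" using x rprm by (auto intro: add_pos_nonneg)
      show "((\<lambda>x. sqrt (x^2 + a^2)) has_real_derivative x / sqrt (x^2 + a^2)) (at x)"
        using p by (auto intro!: derivative_eq_intros simp: field_simps)
    qed
    have dE: "((\<lambda>x. exp (- \<i> * \<omega> * complex_of_real x)) has_vector_derivative exp (- \<i> * \<omega> * complex_of_real x) * (- \<i> * \<omega>)) (at x)"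
    proof -
      have "((\<lambda>z. exp (- \<i> * \<omega> * z)) has_field_derivative exp (- \<i> * \<omega> * complex_of_real x) * (- \<i> * \<omega>)) (at (complex_of_real x))"
        by (auto intro!: derivative_eq_intros)
      from has_vector_derivative_real_field[OF this] show ?thesis by simp
    qed
    from has_vector_derivative_mult[OF has_vector_derivative_mult[OF dS cpow_deriv[OF x]] dE]
    show ?thesis unfolding A_def A'_def by simp
  qed
  define du where "du = (\<lambda>x. A x * J x + A' x * I x)"
  have wder: "\<forall>x > rplus M a. (whiting M a \<omega> m rs u has_vector_derivative du x) (at x)"
    unfolding wI du_def rp_def[symmetric] by (auto intro!: has_vector_derivative_mult Ader Ider)
  have nCP: "norm (cpow (x - rp) \<beta>) = (x - rp) powr pp" if "x > rp" for x
    using that by (simp add: norm_cpow powr_def \<beta>_def pp_def sg_def)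
  have nE: "norm (exp (- \<i> * \<omega> * complex_of_real x)) = exp (sg * x)" for x
    by (simp add: sg_def)
  have bounds: "norm (whiting M a \<omega> m rs u x) \<le> (C * exp (2* sg*rp)) * ((0 + 1 * sqrt (x^2+a^2)) * ((x-rp) powr pp * exp (-sg*x)))
      \<and> norm (complex_of_real (Delta M a x / (x^2 + a^2)) * du x) \<le> (C * exp (2* sg*rp)) * (((1 + norm \<beta>) + (norm \<omega> + 1) * sqrt (x^2+a^2)) * ((x-rp) powr pp * exp (-sg*x)))"
    if x: "x > rp" for x
  proof -
    define Sq where "Sq = sqrt (x^2+a^2)"
    define P where "P = (x-rp) powr pp"
    define e where "e = exp (sg*x)"
    define CE where "CE = C * exp (-2* sg*(x-rp))"
    have xpos: "x > 0" using x rprm by simp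
    have Sqp: "Sq > 0" unfolding Sq_def using sqpos[OF xpos] .
    have xSq: "x \<le> Sq"
    proof -
      have "sqrt (x^2) \<le> sqrt (x^2+a^2)" by (rule real_sqrt_le_mono) simp
      thus ?thesis unfolding Sq_def using xpos by simp
    qed
    have P0: "P \<ge> 0" unfolding P_def by simp
    have e0: "e > 0" unfolding e_def by simp
    have CE0: "CE \<ge> 0" using C0 unfolding CE_def by simp
    have IJ: "norm (I x) \<le> CE" "norm (J x) \<le> CE" using C[of x] x unfolding CE_def by auto
    have nA: "norm (A x) = Sq * (P * e)" unfolding A_def Sq_def P_def e_def using x xpos
      by (simp add: norm_mult nCP nE sg_def del: real_sqrt_abs)
    have nA': "norm (A' x) \<le> (Sq * norm \<omega> + Sq * norm \<beta> / (x-rp) + x / Sq) * (P * e)"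
    proof -
      define t1 where "t1 = (complex_of_real Sq * cpow (x - rp) \<beta>) * (exp (- \<i> * \<omega> * complex_of_real x) * (- \<i> * \<omega>))"
      define t2 where "t2 = complex_of_real Sq * (cpow (x - rp) \<beta> * (\<beta> / complex_of_real (x - rp)))"
      define t3 where "t3 = complex_of_real (x / Sq) * cpow (x - rp) \<beta>"
      have eq: "A' x = t1 + (t2 + t3) * exp (- \<i> * \<omega> * complex_of_real x)"
        unfolding A'_def t1_def t2_def t3_def Sq_def ..
      have n1: "norm t1 = Sq * P * (e * norm \<omega>)" unfolding t1_def P_def e_def using x Sqp
        by (simp add: norm_mult nCP nE sg_def)
      have n2: "norm t2 = Sq * (P * (norm \<beta> / (x - rp)))" unfolding t2_def P_def using x Sqp
        by (simp add: norm_mult norm_divide nCP del: of_real_diff)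
      have n3: "norm t3 = (x / Sq) * P" unfolding t3_def P_def using x Sqp xpos
        by (simp add: norm_mult norm_divide nCP)
      have "norm (A' x) \<le> norm t1 + norm ((t2 + t3) * exp (- \<i> * \<omega> * complex_of_real x))"
        unfolding eq by (rule norm_triangle_ineq)
      also have "\<dots> \<le> norm t1 + (norm t2 + norm t3) * e"
        unfolding norm_mult nE e_def[symmetric] using e0 by (intro add_left_mono mult_right_mono norm_triangle_ineq) auto
      also have "\<dots> = (Sq * norm \<omega> + Sq * norm \<beta> / (x-rp) + x / Sq) * (P * e)"
        unfolding n1 n2 n3 by (simp add: algebra_simps)
      finally show ?thesis .
    qed
    define d where "d = Delta M a x / (x^2+a^2)"
    have Sq2: "x^2+a^2 = Sq * Sq" unfolding Sq_def by (simp add: add_nonneg_nonneg)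
    have d_eq: "d = (x - rp) * (x - rm) / (Sq * Sq)" unfolding d_def Dfac Sq2 ..
    have d0: "0 \<le> d" unfolding d_eq using x rprm Sqp by (intro divide_nonneg_pos mult_nonneg_nonneg) auto
    have d1: "d \<le> 1"
    proof -
      have "Delta M a x \<le> x^2+a^2" unfolding Delta_def using M_pos xpos by simp
      moreover have "x^2+a^2 > 0" using xpos by (simp add: add_pos_nonneg)
      ultimately show ?thesis unfolding d_def by simp
    qed
    have dSq: "d * (Sq / (x - rp)) \<le> 1"
    proof -
      have "d * (Sq / (x - rp)) = (x - rm) / Sq" unfolding d_eq using x Sqp by (simp add: field_simps)
      also have "\<dots> \<le> 1" using xSq rprm Sqp by simp
      finally show ?thesis .
    qed
    have dx: "d * (x / Sq) \<le> 1"
    proof -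
      have "x / Sq \<le> 1" using xSq Sqp by simp
      thus ?thesis using d0 d1 xpos Sqp by (metis mult_le_one divide_nonneg_pos less_imp_le)
    qed
    have expid: "P * e * CE = (C * exp (2* sg*rp)) * (P * exp (-sg*x))"
    proof -
      have "e * exp (-2* sg*(x-rp)) = exp (2* sg*rp) * exp (-sg*x)"
        unfolding e_def exp_add[symmetric] by (rule arg_cong[where f=exp]) (simp add: algebra_simps)
      thus ?thesis unfolding CE_def by (simp add: ac_simps)
    qed
    show ?thesis
    proof
      have "norm (whiting M a \<omega> m rs u x) = norm (A x) * norm (I x)" unfolding wI by (simp add: norm_mult)
      also have "\<dots> \<le> (Sq * (P * e)) * CE" unfolding nA using IJ Sqp P0 e0 by (intro mult_left_mono) auto
      also have "\<dots> = (C * exp (2* sg*rp)) * ((0 + 1 * Sq) * (P * exp (-sg*x)))"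
      proof -
        have "Sq * (P * e) * CE = Sq * (P * e * CE)" by (simp only: mult.assoc)
        also have "\<dots> = Sq * ((C * exp (2* sg*rp)) * (P * exp (-sg*x)))" by (simp only: expid)
        finally show ?thesis by (simp add: ac_simps)
      qed
      finally show "norm (whiting M a \<omega> m rs u x) \<le> (C * exp (2* sg*rp)) * ((0 + 1 * sqrt (x^2+a^2)) * ((x-rp) powr pp * exp (-sg*x)))"
        unfolding Sq_def P_def .
    next
      have "norm (complex_of_real d * du x) = d * norm (A x * J x + A' x * I x)"
        unfolding du_def using d0 by (simp add: norm_mult)
      also have "\<dots> \<le> d * (norm (A x) * norm (J x) + norm (A' x) * norm (I x))"
        using d0 by (intro mult_left_mono order.trans[OF norm_triangle_ineq add_mono]) (auto simp: norm_mult)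
      also have "\<dots> \<le> d * ((Sq * (P * e)) * CE + ((Sq * norm \<omega> + Sq * norm \<beta> / (x-rp) + x / Sq) * (P * e)) * CE)"
        unfolding nA using d0 IJ nA' CE0 Sqp P0 e0 order.trans[OF norm_ge_zero nA']
        by (intro mult_left_mono add_mono mult_mono) auto
      also have "\<dots> = (d * Sq + d * Sq * norm \<omega> + norm \<beta> * (d * (Sq / (x - rp))) + d * (x / Sq)) * (P * e * CE)"
        by (simp add: algebra_simps)
      also have "\<dots> \<le> (Sq + Sq * norm \<omega> + norm \<beta> * 1 + 1) * (P * e * CE)"
      proof (rule mult_right_mono, intro add_mono)
        show "d * Sq \<le> Sq" using d1 Sqp by (simp add: mult_left_le_one_le less_imp_le)
        show "d * Sq * norm \<omega> \<le> Sq * norm \<omega>" using d1 Sqp by (intro mult_right_mono) (auto simp: mult_left_le_one_le less_imp_le)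
        show "norm \<beta> * (d * (Sq / (x - rp))) \<le> norm \<beta> * 1" using dSq by (intro mult_left_mono) auto
        show "d * (x / Sq) \<le> 1" by (rule dx)
        show "0 \<le> P * e * CE" using P0 e0 CE0 by simp
      qed
      also have "\<dots> = (C * exp (2* sg*rp)) * (((1 + norm \<beta>) + (norm \<omega> + 1) * Sq) * (P * exp (-sg*x)))"
        unfolding expid by (simp add: algebra_simps)
      finally show "norm (complex_of_real (Delta M a x / (x^2 + a^2)) * du x) \<le> (C * exp (2* sg*rp)) * (((1 + norm \<beta>) + (norm \<omega> + 1) * sqrt (x^2+a^2)) * ((x-rp) powr pp * exp (-sg*x)))"
        unfolding d_def Sq_def P_def .
    qed
  qed
  have K0: "C * exp (2 * sg * rp) \<ge> 0" using C0 by simp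
  have pp0: "pp \<ge> 0" unfolding pp_def using M_pos sgp by simp
  have b1: "\<And>x. x > rp \<Longrightarrow> norm (whiting M a \<omega> m rs u x) \<le> (C * exp (2 * sg * rp)) * ((0 + 1 * sqrt (x^2+a^2)) * ((x-rp) powr pp * exp (-sg*x)))"
    using bounds by blast
  have b2: "\<And>x. x > rp \<Longrightarrow> norm (complex_of_real (Delta M a x / (x^2 + a^2)) * du x) \<le> (C * exp (2 * sg * rp)) * (((1 + norm \<beta>) + (norm \<omega> + 1) * sqrt (x^2+a^2)) * ((x-rp) powr pp * exp (-sg*x)))"
    using bounds by blast
  have W: "\<exists>K. \<forall>\<^sub>F x in at_right rp. norm (whiting M a \<omega> m rs u x) \<le> K * (x - rp) powr pp"
      "\<exists>K. \<forall>\<^sub>F x in at_top. norm (whiting M a \<omega> m rs u x) \<le> K * exp (-sg*x) * x powr (1 + pp)"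
    by (rule asym[OF b1 rprm(3) pp0 sgp _ _ K0]; simp)+
  have D: "\<exists>K. \<forall>\<^sub>F x in at_right rp. norm (complex_of_real (Delta M a x / (x^2 + a^2)) * du x) \<le> K * (x - rp) powr pp"
      "\<exists>K. \<forall>\<^sub>F x in at_top. norm (complex_of_real (Delta M a x / (x^2 + a^2)) * du x) \<le> K * exp (-sg*x) * x powr (1 + pp)"
    by (rule asym[OF b2 rprm(3) pp0 sgp _ _ K0]; simp)+
  show ?thesis
    using W D wder unfolding rp_def pp_def sg_def by blast
qed

end
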